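(* Problem (RO-$\Sigma$) has a feasible solution with $B\le N(N+1)/2$.
   Context: A ballot style consists of contests $\mathcal{C}=\{1,\ldots,C\}$, candidates $\mathcal{N}=\{1,\ldots,N\}$ partitioned into nonempty sets $\mathcal{N}_c$ ($c\in\mathcal{C}$), and positive integers $v_c$. A filled-out ballot is a subset $\beta\subseteq\mathcal{N}$; $\mathscr{B}=\{\beta\subseteq\mathcal{N}: |\mathcal{N}_c\cap\beta|\le v_c\ \forall c\}$. For $i\in\mathcal{N}_c$: $T^*_i(\beta_1,\ldots,\beta_B)=\sum_{b=1}^B\mathbb{I}\{i\in\beta_b\text{ and }|\mathcal{N}_c\cap\beta_b|\le v_c\}$, and for a bijection $\sigma$ of $\mathcal{N}$, $T^\sigma_i(\beta_1,\ldots,\beta_B)=\sum_{b=1}^B\mathbb{I}\{\sigma(i)\in\beta_b\text{ and }|\{\sigma(j)\in\beta_b: j\in\mathcal{N}_c\}|\le v_c\}$. $\Sigma$ is the set of non-identity bijections $\mathcal{N}\to\mathcal{N}$. Problem (RO-$\Sigma$): minimize $B$ over $B\in\mathbb{N}$ and $\beta_1,\ldots,\beta_B\in\mathscr{B}$ subject to $T^\sigma(\beta_1,\ldots,\beta_B)\neq T^*(\beta_1,\ldots,\beta_B)$ for all $\sigma\in\Sigma$. *)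

theory Defs
  imports Main
begin

text \<open>Candidates are 1..N; contests are 1..C; ctst i is the contest of candidate i,
  so N_c = {i in {1..N}. ctst i = c}; v c is the vote limit of contest c.\<close>

definition cands :: "nat \<Rightarrow> (nat \<Rightarrow> nat) \<Rightarrow> nat \<Rightarrow> nat set" where
  "cands N ctst c = {i \<in> {1..N}. ctst i = c}"

definition ballot_style :: "nat \<Rightarrow> nat \<Rightarrow> (nat \<Rightarrow> nat) \<Rightarrow> (nat \<Rightarrow> nat) \<Rightarrow> bool" where
  "ballot_style C N ctst v \<longleftrightarrow>
     (\<forall>i\<in>{1..N}. ctst i \<in> {1..C}) \<and>
     (\<forall>c\<in>{1..C}. cands N ctst c \<noteq> {}) \<and>
     (\<forall>c\<in>{1..C}. v c > 0)"

definition valid_ballots :: "nat \<Rightarrow> nat \<Rightarrow> (nat \<Rightarrow> nat) \<Rightarrow> (nat \<Rightarrow> nat) \<Rightarrow> nat set set" where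
  "valid_ballots C N ctst v =
     {\<beta>. \<beta> \<subseteq> {1..N} \<and> (\<forall>c\<in>{1..C}. card (cands N ctst c \<inter> \<beta>) \<le> v c)}"

definition T_star :: "nat \<Rightarrow> (nat \<Rightarrow> nat) \<Rightarrow> (nat \<Rightarrow> nat) \<Rightarrow> nat set list \<Rightarrow> nat \<Rightarrow> nat" where
  "T_star N ctst v bs i =
     (\<Sum>b<length bs. if i \<in> bs ! b \<and> card (cands N ctst (ctst i) \<inter> bs ! b) \<le> v (ctst i)
                      then 1 else 0)"

definition T_sigma :: "nat \<Rightarrow> (nat \<Rightarrow> nat) \<Rightarrow> (nat \<Rightarrow> nat) \<Rightarrow> (nat \<Rightarrow> nat) \<Rightarrow> nat set list \<Rightarrow> nat \<Rightarrow> nat" where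
  "T_sigma N ctst v \<sigma> bs i =
     (\<Sum>b<length bs. if \<sigma> i \<in> bs ! b \<and>
                         card {\<sigma> j | j. j \<in> cands N ctst (ctst i) \<and> \<sigma> j \<in> bs ! b} \<le> v (ctst i)
                      then 1 else 0)"

definition Sigma_perms :: "nat \<Rightarrow> (nat \<Rightarrow> nat) set" where
  "Sigma_perms N = {\<sigma>. bij_betw \<sigma> {1..N} {1..N} \<and> (\<exists>i\<in>{1..N}. \<sigma> i \<noteq> i)}"

definition RO_feasible :: "nat \<Rightarrow> nat \<Rightarrow> (nat \<Rightarrow> nat) \<Rightarrow> (nat \<Rightarrow> nat) \<Rightarrow> nat set list \<Rightarrow> bool" where
  "RO_feasible C N ctst v bs \<longleftrightarrow>
     set bs \<subseteq> valid_ballots C N ctst v \<and>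
     (\<forall>\<sigma>\<in>Sigma_perms N. \<exists>i\<in>{1..N}. T_sigma N ctst v \<sigma> bs i \<noteq> T_star N ctst v bs i)"

end

theory Submission
  imports Defs
begin

definition LL :: "nat \<Rightarrow> nat set list" where
  "LL N = concat (map (\<lambda>k. replicate k {k}) [1..<N+1])"

lemma sum_nth_map: "(\<Sum>b<length xs. f (xs ! b)) = sum_list (map f xs)"
  by (simp add: sum_list_sum_nth atLeast0LessThan)

lemma LL_Suc: "LL (Suc N) = LL N @ replicate (Suc N) {Suc N}"
  by (simp add: LL_def)

lemma LL_len: "length (LL N) = N * (N + 1) div 2"
proof (induction N)
  case 0 then show ?case by (simp add: LL_def)
next
  case (Suc N) then show ?case by (simp add: LL_Suc)
qed

lemma LL_set: "set (LL N) = (\<lambda>k. {k}) ` {1..N}"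
  by (auto simp: LL_def)

lemma cnt:
  assumes "\<forall>k\<in>{1..N}. x \<in> {k} \<longrightarrow> Q {k}"
  shows "sum_list (map (\<lambda>B. if x \<in> B \<and> Q B then (1::nat) else 0) (LL N)) = (if x \<in> {1..N} then x else 0)"
  using assms
proof (induction N)
  case 0 then show ?case by (simp add: LL_def)
next
  case (Suc N)
  have ih: "sum_list (map (\<lambda>B. if x \<in> B \<and> Q B then (1::nat) else 0) (LL N)) = (if x \<in> {1..N} then x else 0)"
    using Suc by auto
  show ?case
  proof (cases "x = Suc N")
    case True
    then have "Q {Suc N}" using Suc.prems by auto
    then show ?thesis using ih True by (simp add: LL_Suc sum_list_replicate)
  next
    case False
    then show ?thesis using ih by (auto simp: LL_Suc sum_list_replicate)
  qed
qed

theorem proposition4: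
  fixes C N :: nat and ctst v :: "nat \<Rightarrow> nat"
  assumes "ballot_style C N ctst v"
  shows "\<exists>bs. RO_feasible C N ctst v bs \<and> length bs \<le> N * (N + 1) div 2"
proof (intro exI conjI)
  have vpos: "v (ctst i) \<ge> 1" if "i \<in> {1..N}" for i
    using assms that unfolding ballot_style_def by fastforce
  have vpos2: "v c \<ge> 1" if "c \<in> {1..C}" for c
    using assms that unfolding ballot_style_def by fastforce
  have cs: "card (A \<inter> {k}) \<le> 1" for A :: "nat set" and k
  proof -
    have "card (A \<inter> {k}) \<le> card {k}" by (rule card_mono) auto
    then show ?thesis by simp
  qed
  have cs2: "card {\<sigma> j | j. j \<in> A \<and> \<sigma> j \<in> {k}} \<le> 1" for A :: "nat set" and \<sigma> :: "nat \<Rightarrow> nat" and k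
  proof -
    have "{\<sigma> j | j. j \<in> A \<and> \<sigma> j \<in> {k}} \<subseteq> {k}" by auto
    then have "card {\<sigma> j | j. j \<in> A \<and> \<sigma> j \<in> {k}} \<le> card {k}" by (rule card_mono[rotated]) auto
    then show ?thesis by simp
  qed
  have Tstar: "T_star N ctst v (LL N) i = i" if "i \<in> {1..N}" for i
  proof -
    have "\<forall>k\<in>{1..N}. i \<in> {k} \<longrightarrow> card (cands N ctst (ctst i) \<inter> {k}) \<le> v (ctst i)"
      using le_trans[OF cs vpos[OF that]] by blast
    then show ?thesis using cnt[of N i "\<lambda>B. card (cands N ctst (ctst i) \<inter> B) \<le> v (ctst i)"] that
      sum_nth_map[of "\<lambda>B. if i \<in> B \<and> card (cands N ctst (ctst i) \<inter> B) \<le> v (ctst i) then (1::nat) else 0" "LL N"]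
      unfolding T_star_def by simp
  qed
  have Tsig: "T_sigma N ctst v \<sigma> (LL N) i = \<sigma> i" if "i \<in> {1..N}" "\<sigma> i \<in> {1..N}" for i \<sigma>
  proof -
    have "\<forall>k\<in>{1..N}. \<sigma> i \<in> {k} \<longrightarrow> card {\<sigma> j | j. j \<in> cands N ctst (ctst i) \<and> \<sigma> j \<in> {k}} \<le> v (ctst i)"
      using le_trans[OF cs2 vpos[OF that(1)]] by blast
    then show ?thesis using cnt[of N "\<sigma> i" "\<lambda>B. card {\<sigma> j | j. j \<in> cands N ctst (ctst i) \<and> \<sigma> j \<in> B} \<le> v (ctst i)"] that
      sum_nth_map[of "\<lambda>B. if \<sigma> i \<in> B \<and> card {\<sigma> j | j. j \<in> cands N ctst (ctst i) \<and> \<sigma> j \<in> B} \<le> v (ctst i) then (1::nat) else 0" "LL N"]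
      unfolding T_sigma_def by simp
  qed
  show "RO_feasible C N ctst v (LL N)"
    unfolding RO_feasible_def
  proof (intro conjI ballI)
    show "set (LL N) \<subseteq> valid_ballots C N ctst v"
    proof
      fix B assume "B \<in> set (LL N)"
      then obtain k where k: "k \<in> {1..N}" "B = {k}" unfolding LL_set by auto
      have "card (cands N ctst c \<inter> B) \<le> v c" if "c \<in> {1..C}" for c
        using le_trans[OF cs vpos2[OF that]] k(2) by blast
      then show "B \<in> valid_ballots C N ctst v"
        unfolding valid_ballots_def using k by auto
    qed
  next
    fix \<sigma> assume "\<sigma> \<in> Sigma_perms N"
    then obtain i where i: "i \<in> {1..N}" "\<sigma> i \<noteq> i" and b: "bij_betw \<sigma> {1..N} {1..N}"
      unfolding Sigma_perms_def by auto
    have si: "\<sigma> i \<in> {1..N}" using b i bij_betwE by blast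
    have "T_sigma N ctst v \<sigma> (LL N) i \<noteq> T_star N ctst v (LL N) i"
      using Tstar[OF i(1)] Tsig[of i \<sigma>, OF i(1) si] i(2) by simp
    then show "\<exists>i\<in>{1..N}. T_sigma N ctst v \<sigma> (LL N) i \<noteq> T_star N ctst v (LL N) i"
      using i(1) by blast
  qed
  show "length (LL N) \<le> N * (N + 1) div 2" by (simp add: LL_len)
qed

end
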